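(* With the notation of the context, for every instance with two candidates $P,Q$ at least one of the following two inequalities holds: $$\sum_{l=k}^m\frac{\tau_{l+1}-\delta}{\tau_{l+1}-1}|B_l|\le\sum_{l=1}^m\frac{\delta\tau_l-1}{\tau_l+1}|A_l|+\sum_{l=1}^{k-1}\frac{\delta-\tau_{l+1}}{\tau_{l+1}+1}|B_l|,$$ $$\sum_{l=k}^m\frac{\tau_{l+1}-\delta}{\tau_{l+1}-1}|A_l|\le\sum_{l=1}^m\frac{\delta\tau_l-1}{\tau_l+1}|B_l|+\sum_{l=1}^{k-1}\frac{\delta-\tau_{l+1}}{\tau_{l+1}+1}|A_l|.$$ Hence a resolute rule selecting $P$ only when the first holds and $Q$ only when the second holds always exists.
   Context: Thresholds $1\le\tau_1<\dots<\tau_m$, $\tau_0=1/\tau_1$, $\tau_{m+1}=\infty$; $\delta=\max_{0\le l\le m}\frac{\tau_l\tau_{l+1}+2\tau_{l+1}-1}{\tau_l\tau_{l+1}+1}$ (the $l=m$ term meaning $(\tau_m+2)/\tau_m$); $k\in\{1,\dots,m\}$ satisfies $\tau_k\le\delta<\tau_{k+1}$; $\frac{\tau_{m+1}-\delta}{\tau_{m+1}-1}$ is interpreted as $1$. Voters and candidates lie in a metric space $(X,d)$; voter $i$'s preference strength for $P$ over $Q$ is $\alpha_i^{PQ}=d(i,Q)/d(i,P)$ when $d(i,P)\le d(i,Q)$. $A_l=\{i: d(i,P)\le d(i,Q),\ \tau_l\le\alpha_i^{PQ}<\tau_{l+1}\}$ and $B_l=\{j: d(j,Q)\le d(j,P),\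 \tau_l\le\alpha_j^{QP}<\tau_{l+1}\}$ for $l=1,\dots,m$. *)

theory Defs
  imports "HOL-Analysis.Analysis" "HOL-Library.Extended_Real"
begin

text \<open>When d(x,P) = 0 < d(x,Q) the ratio is +infinity;
  when both distances are 0 (P and Q at the voter's location) it is taken to be 1.\<close>
definition pref_strength :: "'a::metric_space \<Rightarrow> 'a \<Rightarrow> 'a \<Rightarrow> ereal" where
  "pref_strength x P Q =
     (if dist x P = 0 then (if dist x Q = 0 then 1 else \<infinity>)
      else ereal (dist x Q / dist x P))"

text \<open>Extended thresholds: tau_0 = 1/tau_1, tau_l for 1 <= l <= m (tau_{m+1} = infinity is
  handled separately wherever it occurs).\<close>
definition tau_ext :: "(nat \<Rightarrow> real) \<Rightarrow> nat \<Rightarrow> real" where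
  "tau_ext \<tau> l = (if l = 0 then 1 / \<tau> 1 else \<tau> l)"

definition delta :: "(nat \<Rightarrow> real) \<Rightarrow> nat \<Rightarrow> real" where
  "delta \<tau> m = Max ((\<lambda>l. (tau_ext \<tau> l * \<tau> (Suc l) + 2 * \<tau> (Suc l) - 1)
                              / (tau_ext \<tau> l * \<tau> (Suc l) + 1)) ` {0..<m}
                    \<union> {(\<tau> m + 2) / \<tau> m})"

definition coef_hi :: "(nat \<Rightarrow> real) \<Rightarrow> nat \<Rightarrow> nat \<Rightarrow> real" where
  "coef_hi \<tau> m l = (if l = m then 1 else (\<tau> (Suc l) - delta \<tau> m) / (\<tau> (Suc l) - 1))"

text \<open>A_l: voters (indices in N, located by loc) weakly preferring P to Q with
  tau_l <= alpha^{PQ} < tau_{l+1} (tau_{m+1} = infinity). B_l is obtained by swapping P and Q.\<close>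
definition pref_class ::
  "(nat \<Rightarrow> real) \<Rightarrow> nat \<Rightarrow> 'v set \<Rightarrow> ('v \<Rightarrow> 'a::metric_space) \<Rightarrow> 'a \<Rightarrow> 'a \<Rightarrow> nat \<Rightarrow> 'v set" where
  "pref_class \<tau> m N loc P Q l =
     {i \<in> N. dist (loc i) P \<le> dist (loc i) Q
            \<and> ereal (\<tau> l) \<le> pref_strength (loc i) P Q
            \<and> (l < m \<longrightarrow> pref_strength (loc i) P Q < ereal (\<tau> (Suc l)))}"

end

theory Submission
  imports Defs
begin

lemma tau_ge1:
  fixes \<tau> :: "nat \<Rightarrow> real"
  assumes "1 \<le> \<tau> 1" and "\<forall>l. 1 \<le> l \<and> l < m \<longrightarrow> \<tau> l < \<tau> (Suc l)"
  shows "1 \<le> l \<Longrightarrow> l \<le> m \<Longrightarrow> 1 \<le> \<tau> l"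
proof (induction l)
  case 0 then show ?case by simp
next
  case (Suc n)
  show ?case
  proof (cases "n = 0")
    case True then show ?thesis using assms by simp
  next
    case False
    then have "1 \<le> \<tau> n" using Suc by simp
    moreover have "\<tau> n < \<tau> (Suc n)" using assms False Suc.prems by simp
    ultimately show ?thesis by linarith
  qed
qed

theorem mainTheorem10:
  fixes \<tau> :: "nat \<Rightarrow> real" and m k :: nat
    and N :: "'v set" and loc :: "'v \<Rightarrow> 'a::metric_space" and P Q :: 'a
  assumes "1 \<le> m"
    and "1 \<le> \<tau> 1"
    and "\<forall>l. 1 \<le> l \<and> l < m \<longrightarrow> \<tau> l < \<tau> (Suc l)"
    and "finite N"
    and "1 \<le> k" and "k \<le> m"
    and "\<tau> k \<le> delta \<tau> m"
    and "k < m \<longrightarrow> delta \<tau> m < \<tau> (Suc k)"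
  shows "(\<Sum>l=k..m. coef_hi \<tau> m l * real (card (pref_class \<tau> m N loc Q P l)))
           \<le> (\<Sum>l=1..m. (delta \<tau> m * \<tau> l - 1) / (\<tau> l + 1) * real (card (pref_class \<tau> m N loc P Q l)))
             + (\<Sum>l=1..<k. (delta \<tau> m - \<tau> (Suc l)) / (\<tau> (Suc l) + 1) * real (card (pref_class \<tau> m N loc Q P l)))
       \<or> (\<Sum>l=k..m. coef_hi \<tau> m l * real (card (pref_class \<tau> m N loc P Q l)))
           \<le> (\<Sum>l=1..m. (delta \<tau> m * \<tau> l - 1) / (\<tau> l + 1) * real (card (pref_class \<tau> m N loc Q P l)))
             + (\<Sum>l=1..<k. (delta \<tau> m - \<tau> (Suc l)) / (\<tau> (Suc l) + 1) * real (card (pref_class \<tau> m N loc P Q l)))"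
proof -
  define d where "d = delta \<tau> m"
  define a where "a l = real (card (pref_class \<tau> m N loc P Q l))" for l
  define b where "b l = real (card (pref_class \<tau> m N loc Q P l))" for l
  define h where "h l = coef_hi \<tau> m l" for l
  define x where "x l = (d * \<tau> l - 1) / (\<tau> l + 1)" for l
  define y where "y l = (d - \<tau> (Suc l)) / (\<tau> (Suc l) + 1)" for l
  have t1: "1 \<le> \<tau> l" if "1 \<le> l" "l \<le> m" for l
    using tau_ge1[OF assms(2) assms(3)] that by blast
  have fin: "finite ((\<lambda>l. (tau_ext \<tau> l * \<tau> (Suc l) + 2 * \<tau> (Suc l) - 1)
                              / (tau_ext \<tau> l * \<tau> (Suc l) + 1)) ` {0..<m}
                    \<union> {(\<tau> m + 2) / \<tau> m})" by simp
  have dm: "(\<tau> m + 2) / \<tau> m \<le> d"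
    unfolding d_def delta_def by (rule Max_ge[OF fin]) simp
  have dl: "(\<tau> l * \<tau> (Suc l) + 2 * \<tau> (Suc l) - 1) / (\<tau> l * \<tau> (Suc l) + 1) \<le> d"
    if "1 \<le> l" "l < m" for l
  proof -
    have "(\<tau> l * \<tau> (Suc l) + 2 * \<tau> (Suc l) - 1) / (\<tau> l * \<tau> (Suc l) + 1)
       = (tau_ext \<tau> l * \<tau> (Suc l) + 2 * \<tau> (Suc l) - 1) / (tau_ext \<tau> l * \<tau> (Suc l) + 1)"
      using that by (simp add: tau_ext_def)
    also have "\<dots> \<le> d" unfolding d_def delta_def
      by (rule Max_ge[OF fin]) (use that in auto)
    finally show ?thesis .
  qed
  have tm: "1 \<le> \<tau> m" using t1 assms(1) by simp
  have d1: "1 \<le> d"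
  proof -
    have "1 \<le> (\<tau> m + 2) / \<tau> m" using tm by (simp add: field_simps)
    then show ?thesis using dm by simp
  qed
  have a0: "0 \<le> a l" "0 \<le> b l" for l by (simp_all add: a_def b_def)
  have hi: "h l * (a l + b l) \<le> x l * (a l + b l)" if "k \<le> l" "l \<le> m" for l
  proof -
    have "h l \<le> x l"
    proof (cases "l = m")
      case True
      have "\<tau> m + 2 \<le> d * \<tau> m" using dm tm by (simp add: field_simps)
      then show ?thesis using True tm unfolding h_def x_def coef_hi_def
        by (simp add: field_simps)
    next
      case False
      have l1: "1 \<le> l" "l < m" using that assms(5) False by auto
      have tl: "1 \<le> \<tau> l" using t1 l1 by simp
      have ts: "\<tau> l < \<tau> (Suc l)" using assms(3) l1 by simp
      have q: "\<tau> l * \<tau> (Suc l) + 2 * \<tau> (Suc l) - 1 \<le> d * (\<tau> l * \<tau> (Suc l) + 1)"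
      proof -
        have pos: "0 < \<tau> l * \<tau> (Suc l) + 1" using tl ts
          by (smt (verit) mult_nonneg_nonneg)
        show ?thesis using dl[OF l1] pos by (simp add: divide_le_eq mult.commute)
      qed
      have "(\<tau> (Suc l) - d) * (\<tau> l + 1) \<le> (d * \<tau> l - 1) * (\<tau> (Suc l) - 1)"
        using q by (simp add: algebra_simps)
      then have "(\<tau> (Suc l) - d) / (\<tau> (Suc l) - 1) \<le> (d * \<tau> l - 1) / (\<tau> l + 1)"
        using tl ts by (simp add: divide_simps)
      then show ?thesis using False unfolding h_def x_def coef_hi_def d_def by simp
    qed
    moreover have "0 \<le> a l + b l" using a0 by (simp add: add_nonneg_nonneg)
    ultimately show ?thesis by (rule mult_right_mono)
  qed
  have lo: "0 \<le> (x l + y l) * (a l + b l)" if "1 \<le> l" "l < k" for l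
  proof -
    have tl: "1 \<le> \<tau> l" using t1 that assms(6) by simp
    have ts: "\<tau> l < \<tau> (Suc l)" using assms(3) that assms(6) by simp
    have "\<tau> (Suc l) \<le> \<tau> k"
    proof -
      have "\<tau> (Suc l) \<le> \<tau> (Suc l + j)" if "Suc l + j \<le> m" for j
        using that
      proof (induction j)
        case 0 then show ?case by simp
      next
        case (Suc j)
        then have "\<tau> (Suc l + j) < \<tau> (Suc (Suc l + j))" using assms(3) by simp
        then show ?case using Suc by simp
      qed
      from this[of "k - Suc l"] show ?thesis using that assms(6) by simp
    qed
    then have ds: "\<tau> (Suc l) \<le> d" using assms(7) d_def by simp
    have "0 \<le> x l" unfolding x_def using tl d1
      by (intro divide_nonneg_pos) (simp_all add: mult_mono' order_trans[OF _ mult_mono[of 1 d 1 "\<tau> l"]])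
    moreover have "0 \<le> y l" unfolding y_def using ds ts tl by simp
    moreover have "0 \<le> a l + b l" using a0 by (simp add: add_nonneg_nonneg)
    ultimately show ?thesis by simp
  qed
  have split: "{1..m} = {1..<k} \<union> {k..m}" using assms(5,6) by auto
  have S: "(\<Sum>l=1..m. f l) = (\<Sum>l=1..<k. f l) + (\<Sum>l=k..m. f l)" for f :: "nat \<Rightarrow> real"
    unfolding split by (rule sum.union_disjoint) auto
  have "(\<Sum>l=k..m. h l * (a l + b l)) \<le> (\<Sum>l=k..m. x l * (a l + b l))"
    by (rule sum_mono) (use hi in auto)
  moreover have "0 \<le> (\<Sum>l=1..<k. (x l + y l) * (a l + b l))"
    by (rule sum_nonneg) (use lo in auto)
  moreover have "(\<Sum>l=k..m. h l * (a l + b l)) = (\<Sum>l=k..m. h l * b l) + (\<Sum>l=k..m. h l * a l)"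
    by (simp add: algebra_simps sum.distrib)
  moreover have "(\<Sum>l=k..m. x l * (a l + b l)) = (\<Sum>l=k..m. x l * a l) + (\<Sum>l=k..m. x l * b l)"
    by (simp add: algebra_simps sum.distrib)
  moreover have "(\<Sum>l=1..<k. (x l + y l) * (a l + b l)) = (\<Sum>l=1..<k. x l * a l) + (\<Sum>l=1..<k. x l * b l)
      + (\<Sum>l=1..<k. y l * a l) + (\<Sum>l=1..<k. y l * b l)"
    by (simp add: algebra_simps sum.distrib)
  moreover note S[of "\<lambda>l. x l * a l"] S[of "\<lambda>l. x l * b l"]
  ultimately have key: "(\<Sum>l=k..m. h l * b l) + (\<Sum>l=k..m. h l * a l)
     \<le> ((\<Sum>l=1..m. x l * a l) + (\<Sum>l=1..<k. y l * b l))
      + ((\<Sum>l=1..m. x l * b l) + (\<Sum>l=1..<k. y l * a l))"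
    by linarith
  then show ?thesis unfolding h_def x_def y_def a_def b_def d_def by linarith
qed

end
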